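(* For the problem of minimizing energy plus integral weighted flow time, $\mathrm{cost}(S,\mathcal{J})=E(S)+\sum_{j\in\mathcal{J}}v_j(c_j^S-r_j)$, with $\alpha\ge1$, the cost function is $\beta$-smooth for $\beta(\mathcal{J})=\max\big(4\max_{j\in\mathcal{J}}v_j,\;2^\alpha-1\big)$.
   Context: Jobs are tuples $(j,r_j,p_j,v_j)$ (identifier, release time, processing time, weight $v_j>0$). A feasible schedule for $\mathcal{J}$ assigns speeds $s_j(t)\ge0$ (zero before $r_j$, $\int s_j=p_j$); energy $E(S)=\int(\sum_js_j(t))^\alpha dt$; work profile $w^S_j(t)=p_j-\int_{r_j}^ts_j$; $c_j^S$ is the completion time; the quality cost is $F(S,\mathcal{J})=\sum_jv_j(c_j^S-r_j)$; $\mathtt{OPT}(\mathcal{J})$ is the minimum of $E(S)+F(S,\mathcal{J})$. A function $\beta$ from job sets to $\mathbb{R}$ is smooth if for every $\mathcal{J}$, all $r'_j\ge0$ and $\eta_j\ge0$, $\beta(\mathcal{J}')\le(1+\max_j\eta_j)\beta(\mathcal{J})$ where $\mathcal{J}'=\{(j,r'_j,p_j(1+\eta_j),v_j(1+\eta_j))\}$; it is monotone if $\beta(\mathcal{J}'')\le\beta(\mathcal{J})$ for $\mathcal{J}''\subseteq\mathcal{J}$. The cost function is $\beta$-smooth if $\beta\ge1$ is smooth and monotone and for all $\eta,\eta'\in[0,1]$, all $\mathcal{J}_1,\mathcal{J}_2$ with $|\mathcal{J}_1|=|\mathcal{J}_2|$, every bijection $\pi:\mathcal{J}_1\to\mathcal{J}_2$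 and all feasible $S_1,S_2$ for $\mathcal{J}_1,\mathcal{J}_2$: (i) if for all $j\in\mathcal{J}_1$, $|r_j-r_{\pi(j)}|\le\eta'$, $p_j\le p_{\pi(j)}(1+\eta)$ and $v_j\le v_{\pi(j)}(1+\eta)$, then $\mathtt{OPT}(\mathcal{J}_1)\le(1+\beta(\mathcal{J}_1)\eta)\mathtt{OPT}(\mathcal{J}_2)+\beta(\mathcal{J}_1)|\mathcal{J}_1|\eta'$; (ii) if for all $j\in\mathcal{J}_1$, $p_j\le p_{\pi(j)}$, $v_j\le v_{\pi(j)}$, $r_j\ge r_{\pi(j)}-\eta'$, and $w^{S_1}_j(t)\le w^{S_2}_{\pi(j)}(t-\eta')$ for all $t\ge r_{\pi(j)}+\eta'$, then $F(S_1,\mathcal{J}_1)\le F(S_2,\mathcal{J}_2)+\beta(\mathcal{J}_1)|\mathcal{J}_1|\eta'$. *)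

theory Defs
  imports "HOL-Analysis.Analysis"
begin

type_synonym 'i job = "'i \<times> real \<times> real \<times> real"

definition jid :: "'i job \<Rightarrow> 'i" where "jid x = fst x"
definition rel :: "'i job \<Rightarrow> real" where "rel x = fst (snd x)"
definition proc :: "'i job \<Rightarrow> real" where "proc x = fst (snd (snd x))"
definition wt :: "'i job \<Rightarrow> real" where "wt x = snd (snd (snd x))"

definition valid_jobs :: "'i job set \<Rightarrow> bool" where
  "valid_jobs J \<longleftrightarrow> finite J \<and> inj_on jid J \<and>
     (\<forall>x\<in>J. rel x \<ge> 0 \<and> proc x > 0 \<and> wt x > 0)"

text \<open>A schedule gives for each job its speed as a function of time.\<close>
type_synonym 'i schedule = "'i job \<Rightarrow> real \<Rightarrow> real"

definition work :: "'i schedule \<Rightarrow> 'i job \<Rightarrow> real \<Rightarrow> real" where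
  "work S x t = proc x - integral {rel x..t} (S x)"

definition compl :: "'i schedule \<Rightarrow> 'i job \<Rightarrow> real" where
  "compl S x = Inf {t. rel x \<le> t \<and> work S x t = 0}"

definition feasible :: "'i job set \<Rightarrow> 'i schedule \<Rightarrow> bool" where
  "feasible J S \<longleftrightarrow> (\<forall>x\<in>J.
      (\<forall>t. S x t \<ge> 0) \<and> (\<forall>t. t < rel x \<longrightarrow> S x t = 0) \<and>
      (S x has_integral proc x) UNIV \<and> (\<exists>t. work S x t = 0))"

definition energy :: "real \<Rightarrow> 'i job set \<Rightarrow> 'i schedule \<Rightarrow> ennreal" where
  "energy \<alpha> J S = (\<integral>\<^sup>+ t. ennreal ((\<Sum>x\<in>J. S x t) powr \<alpha>) \<partial>lebesgue)"

definition flow :: "'i job set \<Rightarrow> 'i schedule \<Rightarrow> real" where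
  "flow J S = (\<Sum>x\<in>J. wt x * (compl S x - rel x))"

definition OPT :: "real \<Rightarrow> 'i job set \<Rightarrow> ennreal" where
  "OPT \<alpha> J = (INF S\<in>{S. feasible J S}. energy \<alpha> J S + ennreal (flow J S))"

definition smooth_fn :: "('i job set \<Rightarrow> real) \<Rightarrow> bool" where
  "smooth_fn \<beta> \<longleftrightarrow> (\<forall>J r' \<eta>. valid_jobs J \<longrightarrow> (\<forall>x\<in>J. r' x \<ge> 0) \<longrightarrow> (\<forall>x\<in>J. \<eta> x \<ge> 0) \<longrightarrow>
      \<beta> ((\<lambda>x. (jid x, r' x, proc x * (1 + \<eta> x), wt x * (1 + \<eta> x))) ` J)
        \<le> (1 + Max (insert 0 (\<eta> ` J))) * \<beta> J)"

definition monotone_fn :: "('i job set \<Rightarrow> real) \<Rightarrow> bool" where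
  "monotone_fn \<beta> \<longleftrightarrow> (\<forall>J J''. valid_jobs J \<longrightarrow> J'' \<subseteq> J \<longrightarrow> \<beta> J'' \<le> \<beta> J)"

definition beta_smooth :: "real \<Rightarrow> ('i job set \<Rightarrow> real) \<Rightarrow> bool" where
  "beta_smooth \<alpha> \<beta> \<longleftrightarrow>
     (\<forall>J. valid_jobs J \<longrightarrow> \<beta> J \<ge> 1) \<and> smooth_fn \<beta> \<and> monotone_fn \<beta> \<and>
     (\<forall>\<eta> \<eta>' (J1 :: 'i job set) (J2 :: 'i job set) \<pi>. 0 \<le> \<eta> \<and> \<eta> \<le> 1 \<and> 0 \<le> \<eta>' \<and> \<eta>' \<le> 1 \<and>
        valid_jobs J1 \<and> valid_jobs J2 \<and> card J1 = card J2 \<and> bij_betw \<pi> J1 J2 \<longrightarrow>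
        ((\<forall>x\<in>J1. \<bar>rel x - rel (\<pi> x)\<bar> \<le> \<eta>' \<and> proc x \<le> proc (\<pi> x) * (1 + \<eta>)
                  \<and> wt x \<le> wt (\<pi> x) * (1 + \<eta>)) \<longrightarrow>
          OPT \<alpha> J1 \<le> ennreal (1 + \<beta> J1 * \<eta>) * OPT \<alpha> J2
                        + ennreal (\<beta> J1 * real (card J1) * \<eta>')) \<and>
        (\<forall>S1 S2. feasible J1 S1 \<and> feasible J2 S2 \<and>
           (\<forall>x\<in>J1. proc x \<le> proc (\<pi> x) \<and> wt x \<le> wt (\<pi> x) \<and> rel x \<ge> rel (\<pi> x) - \<eta>' \<and>
              (\<forall>t. t \<ge> rel (\<pi> x) + \<eta>' \<longrightarrow> work S1 x t \<le> work S2 (\<pi> x) (t - \<eta>'))) \<longrightarrow>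
           flow J1 S1 \<le> flow J2 S2 + \<beta> J1 * real (card J1) * \<eta>'))"

text \<open>max over an empty job set is taken to be 0 (all weights are positive).\<close>
definition maxwt :: "'i job set \<Rightarrow> real" where
  "maxwt J = Max (insert 0 (wt ` J))"

end

theory Submission
  imports Defs
begin

lemma work_lt: "t < rel x \<Longrightarrow> work S x t = proc x"
  by (simp add: work_def)

lemma feasD:
  assumes "feasible J S" "x \<in> J"
  shows "\<And>t. S x t \<ge> 0" "\<And>t. t < rel x \<Longrightarrow> S x t = 0" "(S x has_integral proc x) UNIV"
        "\<exists>t. work S x t = 0"
  using assms unfolding feasible_def by auto

lemma work_nonneg:
  assumes "feasible J S" "x \<in> J" "proc x > 0"
  shows "0 \<le> work S x t"
proof (cases "t < rel x")
  case True then show ?thesis using assms work_lt[OF True, of S] by simp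
next
  case False
  have I: "(S x has_integral proc x) UNIV" using feasD[OF assms(1,2)] by auto
  have "integral {rel x..t} (S x) \<le> integral UNIV (S x)"
    apply (rule integral_subset_le)
    using I feasD[OF assms(1,2)] by (auto intro: integrable_on_subinterval)
  also have "\<dots> = proc x" using I by (simp add: integral_unique)
  finally show ?thesis by (simp add: work_def)
qed

lemma Z_ne:
  assumes "feasible J S" "x \<in> J" "proc x > 0"
  shows "{t. rel x \<le> t \<and> work S x t = 0} \<noteq> {}"
proof -
  obtain t where t: "work S x t = 0" using feasD[OF assms(1,2)] by auto
  have "\<not> t < rel x" using work_lt[of t x S] t assms(3) by auto
  then show ?thesis using t by (auto simp: not_less)
qed

lemma compl_ge_rel:
  assumes "{t. rel x \<le> t \<and> work S x t = 0} \<noteq> {}"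
  shows "rel x \<le> compl S x"
  unfolding compl_def by (rule cInf_greatest[OF assms]) auto

lemma compl_shift:
  assumes ne: "{t. rel y \<le> t \<and> work S2 y t = 0} \<noteq> {}"
    and h: "\<And>z. rel y \<le> z \<Longrightarrow> work S2 y z = 0 \<Longrightarrow> rel x \<le> z + d \<and> work S1 x (z + d) = 0"
  shows "compl S1 x \<le> compl S2 y + d"
proof -
  have "compl S1 x - d \<le> compl S2 y"
    unfolding compl_def
  proof (rule cInf_greatest[OF ne])
    fix z assume "z \<in> {t. rel y \<le> t \<and> work S2 y t = 0}"
    then have "z + d \<in> {t. rel x \<le> t \<and> work S1 x t = 0}" using h by auto
    then have "Inf {t. rel x \<le> t \<and> work S1 x t = 0} \<le> z + d"
      by (rule cInf_lower) (auto intro: bdd_belowI[where m="rel x"])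
    then show "Inf {t. rel x \<le> t \<and> work S1 x t = 0} - d \<le> z" by simp
  qed
  then show ?thesis by simp
qed

lemma flow_term:
  fixes a b e w W :: real
  assumes "0 \<le> a" "a \<le> b + 2*e" "0 \<le> b" "0 < w" "w \<le> W"
  shows "w*a \<le> W*b + 2*e*w"
proof -
  have "w*a \<le> w*(b+2*e)" using assms by (intro mult_left_mono) auto
  also have "\<dots> = w*b + 2*e*w" by (simp add: algebra_simps)
  also have "w*b \<le> W*b" using assms by (intro mult_right_mono) auto
  finally show ?thesis by simp
qed

lemma maxwt_ge: "finite J \<Longrightarrow> x \<in> J \<Longrightarrow> wt x \<le> maxwt J"
  unfolding maxwt_def by (rule Max_ge) auto

lemma maxwt_nonneg: "finite J \<Longrightarrow> 0 \<le> maxwt J"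
  unfolding maxwt_def by (rule Max_ge) auto

lemma flow_nonneg:
  assumes "valid_jobs J" "feasible J S"
  shows "0 \<le> flow J S"
  unfolding flow_def
proof (rule sum_nonneg)
  fix x assume x: "x \<in> J"
  have p: "proc x > 0" "wt x > 0" using assms(1) x by (auto simp: valid_jobs_def)
  have "rel x \<le> compl S x" by (rule compl_ge_rel[OF Z_ne[OF assms(2) x p(1)]])
  then show "0 \<le> wt x * (compl S x - rel x)" using p by simp
qed

lemma shift_nn:
  fixes f :: "real \<Rightarrow> ennreal"
  assumes "f \<in> borel_measurable lebesgue"
  shows "(\<integral>\<^sup>+t. f (t - d) \<partial>lebesgue) = (\<integral>\<^sup>+t. f t \<partial>lebesgue)"
  using nn_integral_real_affine_lebesgue[OF assms, where c=1 and t="-d"] by simp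

lemma shift_meas:
  fixes f :: "real \<Rightarrow> 'b::topological_space"
  assumes "f \<in> borel_measurable lebesgue"
  shows "(\<lambda>t. f (t - d)) \<in> borel_measurable lebesgue"
proof -
  have m: "(\<lambda>x::real. -d + x) \<in> lebesgue \<rightarrow>\<^sub>M lebesgue"
    using lebesgue_affine_measurable[where c="\<lambda>x::real. 1" and t="-d"] by simp
  have "(\<lambda>t. f (-d + t)) \<in> borel_measurable lebesgue"
    using measurable_compose[OF m assms] by (simp add: comp_def)
  then show ?thesis by simp
qed


lemma two_powr_ge: "(\<alpha>::real) \<ge> 1 \<Longrightarrow> 2 \<le> 2 powr \<alpha>"
  using powr_mono[of 1 \<alpha> "2::real"] by simp

lemma beta_ge1: "(\<alpha>::real) \<ge> 1 \<Longrightarrow> 1 \<le> max (4 * maxwt J) (2 powr \<alpha> - 1)"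
  using two_powr_ge[of \<alpha>] by simp

lemma max_scale:
  fixes a' a b M :: real
  assumes "a' \<le> (1+M)*a" "b \<ge> 0" "0 \<le> M" "0 \<le> a"
  shows "max (4*a') b \<le> (1+M) * max (4*a) b"
proof -
  have "4*a' \<le> (1+M)*(4*a)" using assms by simp
  also have "\<dots> \<le> (1+M) * max (4*a) b" using assms by (intro mult_left_mono) auto
  finally have 1: "4*a' \<le> (1+M) * max (4*a) b" .
  have "b \<le> (1+M)*b" using assms by (simp add: algebra_simps)
  also have "\<dots> \<le> (1+M) * max (4*a) b" using assms by (intro mult_left_mono) auto
  finally show ?thesis using 1 by simp
qed

lemma smooth_beta:
  assumes "(\<alpha>::real) \<ge> 1"
  shows "smooth_fn (\<lambda>J :: 'i job set. max (4 * maxwt J) (2 powr \<alpha> - 1))"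
  unfolding smooth_fn_def
proof (intro allI impI)
  fix J :: "'i job set" and r' :: "'i job \<Rightarrow> real" and \<eta> :: "'i job \<Rightarrow> real"
  assume v: "valid_jobs J" and r: "\<forall>x\<in>J. 0 \<le> r' x" and e: "\<forall>x\<in>J. 0 \<le> \<eta> x"
  have fin: "finite J" using v by (simp add: valid_jobs_def)
  define M where "M = Max (insert 0 (\<eta> ` J))"
  have M0: "0 \<le> M" unfolding M_def using fin by (intro Max_ge) auto
  have Me: "\<eta> x \<le> M" if "x \<in> J" for x unfolding M_def using fin that by (intro Max_ge) auto
  have m0: "0 \<le> maxwt J" using maxwt_nonneg[OF fin] .
  let ?J' = "(\<lambda>x. (jid x, r' x, proc x * (1 + \<eta> x), wt x * (1 + \<eta> x))) ` J"
  have "maxwt ?J' \<le> (1 + M) * maxwt J"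
    unfolding maxwt_def[of ?J']
  proof (subst Max_le_iff, goal_cases)
    case 1 then show ?case using fin by simp
  next
    case 2 then show ?case by simp
  next
    case 3
    show ?case
    proof
      fix a assume "a \<in> insert 0 (wt ` ?J')"
      then consider "a = 0" | x where "x \<in> J" "a = wt x * (1 + \<eta> x)"
        by (auto simp: wt_def)
      then show "a \<le> (1 + M) * maxwt J"
      proof cases
        case 1 then show ?thesis using M0 m0 by simp
      next
        case (2 x)
        have w: "0 < wt x" "wt x \<le> maxwt J" using v 2(1) maxwt_ge[OF fin 2(1)]
          by (auto simp: valid_jobs_def)
        have "wt x * (1 + \<eta> x) \<le> maxwt J * (1 + M)"
          using w e 2(1) Me[OF 2(1)] by (intro mult_mono) auto
        then show ?thesis using 2 by (simp add: mult.commute)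
      qed
    qed
  qed
  moreover have "2 powr \<alpha> - 1 \<ge> 0" using two_powr_ge[OF assms] by simp
  ultimately show "max (4 * maxwt ?J') (2 powr \<alpha> - 1)
        \<le> (1 + Max (insert 0 (\<eta> ` J))) * max (4 * maxwt J) (2 powr \<alpha> - 1)"
    using M0 m0 unfolding M_def[symmetric] by (rule max_scale)
qed

lemma mono_beta:
  "monotone_fn (\<lambda>J :: 'i job set. max (4 * maxwt J) (2 powr \<alpha> - 1))"
  unfolding monotone_fn_def
proof (intro allI impI)
  fix J J'' :: "'i job set" assume v: "valid_jobs J" and s: "J'' \<subseteq> J"
  have "maxwt J'' \<le> maxwt J" unfolding maxwt_def
    using v s by (intro Max_mono) (auto simp: valid_jobs_def)
  then show "max (4 * maxwt J'') (2 powr \<alpha> - 1) \<le> max (4 * maxwt J) (2 powr \<alpha> - 1)" by simp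
qed

lemma flow_sum_bound:
  assumes bij: "bij_betw \<pi> J1 J2" and fin: "finite J1"
    and le: "\<And>x. x \<in> J1 \<Longrightarrow> wt x * (compl S1 x - rel x)
              \<le> c * (wt (\<pi> x) * (compl S2 (\<pi> x) - rel (\<pi> x))) + 2*e*wt x"
    and e: "0 \<le> e"
  shows "flow J1 S1 \<le> c * flow J2 S2 + 2*e*real (card J1) * maxwt J1"
proof -
  have "flow J1 S1 \<le> (\<Sum>x\<in>J1. c * (wt (\<pi> x) * (compl S2 (\<pi> x) - rel (\<pi> x))) + 2*e*wt x)"
    unfolding flow_def by (rule sum_mono) (rule le)
  also have "\<dots> = c * (\<Sum>x\<in>J1. wt (\<pi> x) * (compl S2 (\<pi> x) - rel (\<pi> x))) + 2*e*(\<Sum>x\<in>J1. wt x)"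
    by (simp add: sum.distrib sum_distrib_left)
  also have "(\<Sum>x\<in>J1. wt (\<pi> x) * (compl S2 (\<pi> x) - rel (\<pi> x))) = flow J2 S2"
    unfolding flow_def by (rule sum.reindex_bij_betw[OF bij])
  also have "(\<Sum>x\<in>J1. wt x) \<le> real (card J1) * maxwt J1"
    by (rule sum_bounded_above) (rule maxwt_ge[OF fin])
  finally show ?thesis using e by (simp add: mult_left_mono mult.assoc)
qed

lemma part2:
  assumes v1: "valid_jobs J1" and v2: "valid_jobs J2" and bij: "bij_betw \<pi> J1 J2"
    and f1: "feasible J1 S1" and f2: "feasible J2 S2" and e: "0 \<le> \<eta>'"
    and H: "\<forall>x\<in>J1. proc x \<le> proc (\<pi> x) \<and> wt x \<le> wt (\<pi> x) \<and> rel x \<ge> rel (\<pi> x) - \<eta>' \<and>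
              (\<forall>t. t \<ge> rel (\<pi> x) + \<eta>' \<longrightarrow> work S1 x t \<le> work S2 (\<pi> x) (t - \<eta>'))"
  shows "flow J1 S1 \<le> flow J2 S2 + 2*\<eta>' * real (card J1) * maxwt J1"
proof -
  have fin: "finite J1" using v1 by (simp add: valid_jobs_def)
  have "flow J1 S1 \<le> 1 * flow J2 S2 + 2*\<eta>'*real (card J1) * maxwt J1"
  proof (rule flow_sum_bound[OF bij fin _ e])
    fix x assume x: "x \<in> J1"
    let ?y = "\<pi> x"
    have y: "?y \<in> J2" using bij x by (auto simp: bij_betw_def)
    have px: "proc x > 0" "wt x > 0" using v1 x by (auto simp: valid_jobs_def)
    have py: "proc ?y > 0" using v2 y by (auto simp: valid_jobs_def)
    have Hx: "proc x \<le> proc ?y" "wt x \<le> wt ?y" "rel x \<ge> rel ?y - \<eta>'"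
       "\<And>t. t \<ge> rel ?y + \<eta>' \<Longrightarrow> work S1 x t \<le> work S2 ?y (t - \<eta>')"
      using H x by auto
    have c: "compl S1 x \<le> compl S2 ?y + \<eta>'"
    proof (rule compl_shift[OF Z_ne[OF f2 y py]])
      fix z assume z: "rel ?y \<le> z" "work S2 ?y z = 0"
      have "work S1 x (z + \<eta>') \<le> 0" using Hx(4)[of "z+\<eta>'"] z by simp
      moreover have "0 \<le> work S1 x (z + \<eta>')" by (rule work_nonneg[OF f1 x px(1)])
      ultimately have w: "work S1 x (z + \<eta>') = 0" by simp
      have "rel x \<le> z + \<eta>'"
      proof (rule ccontr)
        assume "\<not> rel x \<le> z + \<eta>'"
        then have "work S1 x (z + \<eta>') = proc x" by (intro work_lt) simp
        then show False using w px by simp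
      qed
      then show "rel x \<le> z + \<eta>' \<and> work S1 x (z + \<eta>') = 0" using w by simp
    qed
    have c1: "rel x \<le> compl S1 x" by (rule compl_ge_rel[OF Z_ne[OF f1 x px(1)]])
    have c2: "rel ?y \<le> compl S2 ?y" by (rule compl_ge_rel[OF Z_ne[OF f2 y py]])
    have "wt x * (compl S1 x - rel x) \<le> wt ?y * (compl S2 ?y - rel ?y) + 2*\<eta>'*wt x"
      by (rule flow_term) (use c c1 c2 Hx px in auto)
    then show "wt x * (compl S1 x - rel x) \<le> 1 * (wt ?y * (compl S2 ?y - rel ?y)) + 2*\<eta>'*wt x"
      by simp
  qed
  then show ?thesis by simp
qed

lemma shifted_integral:
  assumes f2: "feasible J2 S2" and y: "y \<in> J2" and k: "0 \<le> k"
  shows "((\<lambda>t. k * S2 y (t - d)) has_integral (k * proc y)) UNIV"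
proof -
  have nn: "\<And>t. 0 \<le> S2 y t" using feasD[OF f2 y] by auto
  have I: "(S2 y has_integral proc y) UNIV" using feasD[OF f2 y] by auto
  then have m: "S2 y \<in> borel_measurable lebesgue" and N: "(\<integral>\<^sup>+t. ennreal (S2 y t) \<partial>lebesgue) = ennreal (proc y)"
    and p: "0 \<le> proc y"
    using has_integral_iff_nn_integral_lebesgue[of "S2 y", OF nn] by auto
  have ms: "(\<lambda>t. S2 y (t - d)) \<in> borel_measurable lebesgue" by (rule shift_meas[OF m])
  have "(\<integral>\<^sup>+t. ennreal (k * S2 y (t - d)) \<partial>lebesgue) = (\<integral>\<^sup>+t. ennreal k * ennreal (S2 y (t - d)) \<partial>lebesgue)"
    using k nn by (simp add: ennreal_mult)
  also have "\<dots> = ennreal k * (\<integral>\<^sup>+t. ennreal (S2 y (t - d)) \<partial>lebesgue)"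
    by (rule nn_integral_cmult) (use ms in measurable)
  also have "(\<integral>\<^sup>+t. ennreal (S2 y (t - d)) \<partial>lebesgue) = (\<integral>\<^sup>+t. ennreal (S2 y t) \<partial>lebesgue)"
    by (rule shift_nn[where f="\<lambda>t. ennreal (S2 y t)"]) (use m in measurable)
  finally have "(\<integral>\<^sup>+t. ennreal (k * S2 y (t - d)) \<partial>lebesgue) = ennreal (k * proc y)"
    using N k p by (simp add: ennreal_mult)
  moreover have "(\<lambda>t. k * S2 y (t - d)) \<in> borel_measurable lebesgue" using ms by measurable
  ultimately show ?thesis
    using has_integral_iff_nn_integral_lebesgue[of "\<lambda>t. k * S2 y (t - d)"] nn k p by auto
qed

lemma shifted_work:
  assumes f2: "feasible J2 S2" and y: "y \<in> J2" and k: "0 \<le> k"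
    and S1: "S1 x = (\<lambda>t. k * S2 y (t - d))" and r: "rel x \<le> rel y + d"
    and p: "k * proc y = proc x"
  shows "work S1 x t = k * work S2 y (t - d)"
proof (cases "t < rel y + d")
  case True
  have "integral {rel x..t} (S1 x) = integral {rel x..t} (\<lambda>_. 0::real)"
    by (rule integral_cong) (use True feasD(2)[OF f2 y] S1 in auto)
  then have "integral {rel x..t} (S1 x) = 0" by simp
  moreover have "work S2 y (t - d) = proc y" using True by (intro work_lt) simp
  ultimately show ?thesis using p by (simp add: work_def)
next
  case False
  let ?r = "rel y + d"
  have int: "S1 x integrable_on {rel x..t}"
    using shifted_integral[OF f2 y k, of d] S1 by (auto intro: integrable_on_subinterval)
  have "integral {rel x..?r} (S1 x) + integral {?r..t} (S1 x) = integral {rel x..t} (S1 x)"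
    by (rule Henstock_Kurzweil_Integration.integral_combine) (use r False int in auto)
  moreover have "integral {rel x..?r} (S1 x) = integral {rel x..?r} (\<lambda>_. 0::real)"
    by (rule integral_spike[of "{?r}"]) (use feasD(2)[OF f2 y] S1 in auto)
  moreover have "integral {?r..t} (S1 x) = k * integral {?r..t} (S2 y \<circ> (+) (-d))"
    using S1 by (simp add: comp_def integral_mult_right)
  moreover have "integral {?r..t} (S2 y \<circ> (+) (-d)) = integral {rel y..t - d} (S2 y)"
    by (subst integral_shift_Icc_real) simp
  ultimately have "integral {rel x..t} (S1 x) = k * integral {rel y..t - d} (S2 y)" by simp
  then show ?thesis using p by (simp add: work_def algebra_simps)
qed

lemma part1_sched:
  assumes v1: "valid_jobs J1" and v2: "valid_jobs J2" and bij: "bij_betw \<pi> J1 J2"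
    and f2: "feasible J2 S2" and e: "0 \<le> \<eta>" and e': "0 \<le> \<eta>'" and a: "\<alpha> \<ge> 1"
    and H: "\<forall>x\<in>J1. \<bar>rel x - rel (\<pi> x)\<bar> \<le> \<eta>' \<and> proc x \<le> proc (\<pi> x) * (1 + \<eta>)
                  \<and> wt x \<le> wt (\<pi> x) * (1 + \<eta>)"
  shows "\<exists>S1. feasible J1 S1 \<and> energy \<alpha> J1 S1 \<le> ennreal ((1+\<eta>) powr \<alpha>) * energy \<alpha> J2 S2
           \<and> flow J1 S1 \<le> (1+\<eta>) * flow J2 S2 + 2*\<eta>' * real (card J1) * maxwt J1"
proof -
  define S1 where "S1 = (\<lambda>x t. proc x / proc (\<pi> x) * S2 (\<pi> x) (t - \<eta>'))"
  define k where "k = (\<lambda>x. proc x / proc (\<pi> x))"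
  have fin1: "finite J1" using v1 by (simp add: valid_jobs_def)
  have fin2: "finite J2" using v2 by (simp add: valid_jobs_def)
  have yJ: "\<pi> x \<in> J2" if "x \<in> J1" for x using bij that by (auto simp: bij_betw_def)
  have px: "proc x > 0" "wt x > 0" if "x \<in> J1" for x using v1 that by (auto simp: valid_jobs_def)
  have py: "proc (\<pi> x) > 0" if "x \<in> J1" for x using v2 yJ[OF that] by (auto simp: valid_jobs_def)
  have k0: "0 \<le> k x" if "x \<in> J1" for x using px[OF that] py[OF that] by (simp add: k_def)
  have kp: "k x * proc (\<pi> x) = proc x" if "x \<in> J1" for x using py[OF that] by (simp add: k_def)
  have kle: "k x \<le> 1 + \<eta>" if "x \<in> J1" for x
    using py[OF that] H that by (simp add: k_def divide_le_eq mult.commute)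
  have S1x: "S1 x = (\<lambda>t. k x * S2 (\<pi> x) (t - \<eta>'))" for x by (simp add: S1_def k_def)
  have rx: "rel x \<le> rel (\<pi> x) + \<eta>'" "rel (\<pi> x) - \<eta>' \<le> rel x" if "x \<in> J1" for x
    using H that by auto
  have W: "work S1 x t = k x * work S2 (\<pi> x) (t - \<eta>')" if "x \<in> J1" for x t
    by (rule shifted_work[where ?S1.0=S1 and x=x and t=t, OF f2 yJ[OF that] k0[OF that] S1x[of x] rx(1)[OF that] kp[OF that]])
  have zshift: "rel x \<le> z + \<eta>' \<and> work S1 x (z + \<eta>') = 0"
    if "x \<in> J1" "rel (\<pi> x) \<le> z" "work S2 (\<pi> x) z = 0" for x z
    using W[OF that(1), of "z + \<eta>'"] that rx[OF that(1)] by simp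
  have feas: "feasible J1 S1"
    unfolding feasible_def
  proof (intro ballI conjI allI impI)
    fix x t assume x: "x \<in> J1"
    show "0 \<le> S1 x t" using k0[OF x] feasD(1)[OF f2 yJ[OF x]] S1x by simp
  next
    fix x t assume x: "x \<in> J1" and t: "t < rel x"
    show "S1 x t = 0" using feasD(2)[OF f2 yJ[OF x], of "t - \<eta>'"] t rx[OF x] S1x by simp
  next
    fix x assume x: "x \<in> J1"
    show "(S1 x has_integral proc x) UNIV"
      using shifted_integral[OF f2 yJ[OF x] k0[OF x], of "\<eta>'"] S1x kp[OF x] by simp
  next
    fix x assume x: "x \<in> J1"
    obtain z where "rel (\<pi> x) \<le> z" "work S2 (\<pi> x) z = 0"
      using Z_ne[OF f2 yJ[OF x] py[OF x]] by auto
    then show "\<exists>t. work S1 x t = 0" using zshift[OF x] by blast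
  qed
  have fl: "flow J1 S1 \<le> (1+\<eta>) * flow J2 S2 + 2*\<eta>' * real (card J1) * maxwt J1"
  proof (rule flow_sum_bound[OF bij fin1 _ e'])
    fix x assume x: "x \<in> J1"
    let ?y = "\<pi> x"
    have c: "compl S1 x \<le> compl S2 ?y + \<eta>'"
      by (rule compl_shift[OF Z_ne[OF f2 yJ[OF x] py[OF x]]]) (rule zshift[OF x])
    have c1: "rel x \<le> compl S1 x" by (rule compl_ge_rel[OF Z_ne[OF feas x px(1)[OF x]]])
    have c2: "rel ?y \<le> compl S2 ?y" by (rule compl_ge_rel[OF Z_ne[OF f2 yJ[OF x] py[OF x]]])
    have "wt x * (compl S1 x - rel x) \<le> (wt ?y * (1+\<eta>)) * (compl S2 ?y - rel ?y) + 2*\<eta>'*wt x"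
      by (rule flow_term) (use c c1 c2 H x px[OF x] rx[OF x] in auto)
    then show "wt x * (compl S1 x - rel x) \<le> (1+\<eta>) * (wt ?y * (compl S2 ?y - rel ?y)) + 2*\<eta>'*wt x"
      by (simp add: algebra_simps)
  qed
  have nn2: "\<And>y t. y \<in> J2 \<Longrightarrow> 0 \<le> S2 y t" using feasD(1)[OF f2] by blast
  have m2: "S2 y \<in> borel_measurable lebesgue" if "y \<in> J2" for y
    using feasD(3)[OF f2 that] has_integral_iff_nn_integral_lebesgue[of "S2 y"] nn2[OF that] by auto
  define g where "g = (\<lambda>s. (\<Sum>y\<in>J2. S2 y s) powr \<alpha>)"
  have gm: "g \<in> borel_measurable lebesgue"
  proof -
    have "(\<lambda>s. \<Sum>y\<in>J2. S2 y s) \<in> borel_measurable lebesgue"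
      by (rule borel_measurable_sum) (rule m2)
    then show ?thesis unfolding g_def by measurable
  qed
  define P where "P = (1+\<eta>) powr \<alpha>"
  have P0: "0 \<le> P" by (simp add: P_def)
  have pt: "(\<Sum>x\<in>J1. S1 x t) powr \<alpha> \<le> P * g (t - \<eta>')" for t
  proof -
    have "(\<Sum>x\<in>J1. S1 x t) \<le> (\<Sum>x\<in>J1. (1+\<eta>) * S2 (\<pi> x) (t - \<eta>'))"
    proof (rule sum_mono)
      fix x assume x: "x \<in> J1"
      show "S1 x t \<le> (1+\<eta>) * S2 (\<pi> x) (t - \<eta>')"
        unfolding S1x by (rule mult_right_mono[OF kle[OF x] nn2[OF yJ[OF x]]])
    qed
    also have "\<dots> = (1+\<eta>) * (\<Sum>y\<in>J2. S2 y (t - \<eta>'))"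
      by (simp add: sum_distrib_left[symmetric] sum.reindex_bij_betw[OF bij, of "\<lambda>y. S2 y (t - \<eta>')"])
    finally have le: "(\<Sum>x\<in>J1. S1 x t) \<le> (1+\<eta>) * (\<Sum>y\<in>J2. S2 y (t - \<eta>'))" .
    have ge: "0 \<le> (\<Sum>x\<in>J1. S1 x t)"
      by (rule sum_nonneg) (use S1x k0 nn2 yJ in auto)
    have "(\<Sum>x\<in>J1. S1 x t) powr \<alpha> \<le> ((1+\<eta>) * (\<Sum>y\<in>J2. S2 y (t - \<eta>'))) powr \<alpha>"
      by (rule powr_mono2) (use a ge le in auto)
    also have "\<dots> = P * g (t - \<eta>')"
      unfolding P_def g_def using e nn2 by (auto intro!: powr_mult sum_nonneg)
    finally show ?thesis .
  qed
  have "energy \<alpha> J1 S1 \<le> (\<integral>\<^sup>+t. ennreal (P * g (t - \<eta>')) \<partial>lebesgue)"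
    unfolding energy_def by (rule nn_integral_mono) (use pt in \<open>auto intro: ennreal_leI\<close>)
  also have "\<dots> = (\<integral>\<^sup>+t. ennreal (P * g t) \<partial>lebesgue)"
    by (rule shift_nn[where f="\<lambda>t. ennreal (P * g t)"]) (use gm in measurable)
  also have "\<dots> = (\<integral>\<^sup>+t. ennreal P * ennreal (g t) \<partial>lebesgue)"
    using P0 by (simp add: ennreal_mult g_def)
  also have "\<dots> = ennreal P * (\<integral>\<^sup>+t. ennreal (g t) \<partial>lebesgue)"
    by (rule nn_integral_cmult) (use gm in measurable)
  also have "(\<integral>\<^sup>+t. ennreal (g t) \<partial>lebesgue) = energy \<alpha> J2 S2"
    by (simp add: energy_def g_def)
  finally have en: "energy \<alpha> J1 S1 \<le> ennreal P * energy \<alpha> J2 S2" .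
  show ?thesis using feas en fl unfolding P_def by blast
qed

lemma convex_bound:
  fixes \<alpha> \<eta> :: real
  assumes a: "\<alpha> \<ge> 1" and e: "0 \<le> \<eta>" "\<eta> \<le> 1"
  shows "(1+\<eta>) powr \<alpha> \<le> 1 + (2 powr \<alpha> - 1) * \<eta>"
proof -
  have "(\<lambda>x::real. x powr \<alpha>) ((1 - \<eta>) *\<^sub>R 1 + \<eta> *\<^sub>R 2) \<le> (1 - \<eta>) * 1 powr \<alpha> + \<eta> * 2 powr \<alpha>"
    by (rule convex_onD[OF powr_convex[OF a]]) (use e in auto)
  then show ?thesis by (simp add: algebra_simps)
qed

lemma OPT_bound:
  fixes c B :: real
  assumes c: "c \<ge> 1" and B: "B \<ge> 0"
    and hyp: "\<And>S2. feasible J2 S2 \<Longrightarrow>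
       OPT \<alpha> J1 \<le> ennreal c * (energy \<alpha> J2 S2 + ennreal (flow J2 S2)) + ennreal B"
  shows "OPT \<alpha> J1 \<le> ennreal c * OPT \<alpha> J2 + ennreal B"
proof (rule ennreal_le_epsilon)
  fix e :: real assume lt: "ennreal c * OPT \<alpha> J2 + ennreal B < top" and e: "0 < e"
  have Itop: "OPT \<alpha> J2 \<noteq> \<infinity>"
  proof
    assume "OPT \<alpha> J2 = \<infinity>"
    then have "ennreal c * OPT \<alpha> J2 = \<infinity>" using c by (simp add: ennreal_mult_top)
    then show False using lt by simp
  qed
  have e': "0 < e / c" using e c by simp
  obtain S2 where S2: "S2 \<in> {S. feasible J2 S}"
    and lt2: "energy \<alpha> J2 S2 + ennreal (flow J2 S2) < OPT \<alpha> J2 + ennreal (e / c)"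
    using INF_approx_ennreal[OF e' _ Itop, of "\<lambda>S. energy \<alpha> J2 S + ennreal (flow J2 S)" "{S. feasible J2 S}"]
    unfolding OPT_def by blast
  have "OPT \<alpha> J1 \<le> ennreal c * (energy \<alpha> J2 S2 + ennreal (flow J2 S2)) + ennreal B"
    using hyp S2 by simp
  also have "\<dots> \<le> ennreal c * (OPT \<alpha> J2 + ennreal (e / c)) + ennreal B"
    using lt2 by (intro add_right_mono mult_left_mono) (auto simp: less_imp_le)
  also have "\<dots> = ennreal c * OPT \<alpha> J2 + ennreal B + ennreal e"
  proof -
    have "ennreal c * ennreal (e / c) = ennreal e" using c e by (simp add: ennreal_mult[symmetric])
    then show ?thesis by (simp add: distrib_left algebra_simps)
  qed
  finally show "OPT \<alpha> J1 \<le> ennreal c * OPT \<alpha> J2 + ennreal B + ennreal e" .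
qed

theorem lemma6:
  fixes \<alpha> :: real
  assumes "\<alpha> \<ge> 1"
  shows "beta_smooth \<alpha> (\<lambda>J :: 'i job set. max (4 * maxwt J) (2 powr \<alpha> - 1))"
  unfolding beta_smooth_def
proof (intro conjI, goal_cases)
  case 1 then show ?case using beta_ge1[OF assms] by blast
next
  case 2 then show ?case by (rule smooth_beta[OF assms])
next
  case 3 then show ?case by (rule mono_beta)
next
  case 4
  show ?case
  proof (intro allI impI conjI, goal_cases)
    case (1 \<eta> \<eta>' J1 J2 \<pi>)
    then have e: "0 \<le> \<eta>" "\<eta> \<le> 1" and e': "0 \<le> \<eta>'" and v1: "valid_jobs J1" and v2: "valid_jobs J2"
      and bij: "bij_betw \<pi> J1 J2"
      and H: "\<forall>x\<in>J1. \<bar>rel x - rel (\<pi> x)\<bar> \<le> \<eta>' \<and> proc x \<le> proc (\<pi> x) * (1 + \<eta>)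
                  \<and> wt x \<le> wt (\<pi> x) * (1 + \<eta>)" by auto
    define b where "b = max (4 * maxwt J1) (2 powr \<alpha> - 1)"
    have fin1: "finite J1" using v1 by (simp add: valid_jobs_def)
    have m0: "0 \<le> maxwt J1" by (rule maxwt_nonneg[OF fin1])
    have b1: "1 \<le> b" unfolding b_def by (rule beta_ge1[OF assms])
    have b4: "4 * maxwt J1 \<le> b" unfolding b_def by simp
    have b2: "2 powr \<alpha> - 1 \<le> b" unfolding b_def by simp
    have nb: "2 * \<eta>' * real (card J1) * maxwt J1 \<le> b * real (card J1) * \<eta>'"
    proof -
      have "2 * maxwt J1 \<le> b" using b4 m0 by simp
      then have "(2 * maxwt J1) * (real (card J1) * \<eta>') \<le> b * (real (card J1) * \<eta>')"
        using e' by (intro mult_right_mono) auto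
      then show ?thesis by (simp add: algebra_simps)
    qed
    let ?c = "1 + b * \<eta>" and ?B = "b * real (card J1) * \<eta>'"
    have c1: "1 \<le> ?c" using b1 e by simp
    have B0: "0 \<le> ?B" using b1 e' by simp
    have "OPT \<alpha> J1 \<le> ennreal ?c * OPT \<alpha> J2 + ennreal ?B"
    proof (rule OPT_bound[OF c1 B0])
      fix S2 assume f2: "feasible J2 S2"
      obtain S1 where f1: "feasible J1 S1"
        and en: "energy \<alpha> J1 S1 \<le> ennreal ((1+\<eta>) powr \<alpha>) * energy \<alpha> J2 S2"
        and fl: "flow J1 S1 \<le> (1+\<eta>) * flow J2 S2 + 2*\<eta>' * real (card J1) * maxwt J1"
        using part1_sched[OF v1 v2 bij f2 e(1) e' assms H] by blast
      have F2: "0 \<le> flow J2 S2" by (rule flow_nonneg[OF v2 f2])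
      have "(2 powr \<alpha> - 1) * \<eta> \<le> b * \<eta>" using b2 e by (intro mult_right_mono) auto
      then have P: "(1+\<eta>) powr \<alpha> \<le> ?c"
        using convex_bound[OF assms e] by linarith
      have "OPT \<alpha> J1 \<le> energy \<alpha> J1 S1 + ennreal (flow J1 S1)"
        unfolding OPT_def using f1 by (intro INF_lower) simp
      also have "energy \<alpha> J1 S1 \<le> ennreal ?c * energy \<alpha> J2 S2"
      proof -
        have "ennreal ((1+\<eta>) powr \<alpha>) * energy \<alpha> J2 S2 \<le> ennreal ?c * energy \<alpha> J2 S2"
          by (rule mult_right_mono) (use P ennreal_leI in auto)
        then show ?thesis using en by (rule order_trans[rotated])
      qed
      also have "ennreal (flow J1 S1) \<le> ennreal ?c * ennreal (flow J2 S2) + ennreal ?B"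
      proof -
        have "(1+\<eta>) * flow J2 S2 \<le> ?c * flow J2 S2"
        proof (rule mult_right_mono[OF _ F2])
          have "\<eta> \<le> b * \<eta>" using b1 e mult_right_mono[of 1 b \<eta>] by simp
          then show "1 + \<eta> \<le> ?c" by simp
        qed
        then have "flow J1 S1 \<le> ?c * flow J2 S2 + ?B" using fl nb by simp
        then have "ennreal (flow J1 S1) \<le> ennreal (?c * flow J2 S2 + ?B)" by (rule ennreal_leI)
        also have "\<dots> = ennreal (?c * flow J2 S2) + ennreal ?B"
          by (rule ennreal_plus) (use c1 F2 B0 in auto)
        also have "ennreal (?c * flow J2 S2) = ennreal ?c * ennreal (flow J2 S2)"
          by (rule ennreal_mult) (use c1 F2 in auto)
        finally show ?thesis .
      qed
      finally show "OPT \<alpha> J1 \<le> ennreal ?c * (energy \<alpha> J2 S2 + ennreal (flow J2 S2)) + ennreal ?B"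
        by (simp add: distrib_left add.assoc)
    qed
    then show ?case unfolding b_def .
  next
    case (2 \<eta> \<eta>' J1 J2 \<pi> S1 S2)
    then have e': "0 \<le> \<eta>'" and v1: "valid_jobs J1" and v2: "valid_jobs J2"
      and bij: "bij_betw \<pi> J1 J2" by auto
    have fin1: "finite J1" using v1 by (simp add: valid_jobs_def)
    have m0: "0 \<le> maxwt J1" by (rule maxwt_nonneg[OF fin1])
    have "flow J1 S1 \<le> flow J2 S2 + 2*\<eta>' * real (card J1) * maxwt J1"
      by (rule part2[OF v1 v2 bij _ _ e']) (use 2 in auto)
    also have "2*\<eta>' * real (card J1) * maxwt J1 \<le> max (4 * maxwt J1) (2 powr \<alpha> - 1) * real (card J1) * \<eta>'"
    proof -
      have "2 * maxwt J1 \<le> max (4 * maxwt J1) (2 powr \<alpha> - 1)" using m0 by simp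
      then have "(2 * maxwt J1) * (real (card J1) * \<eta>') \<le> max (4 * maxwt J1) (2 powr \<alpha> - 1) * (real (card J1) * \<eta>')"
        using e' by (intro mult_right_mono) auto
      then show ?thesis by (simp add: algebra_simps)
    qed
    finally show ?case by simp
  qed
qed

end
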